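(* The length complexity of $\mathsf{C\text{-}RASP}_+$ (with $\mathsf{C\text{-}RASP}_+$ programs as representations and program size as descriptional complexity) is exponential in the size of the program: there is a polynomial $q$ such that any two $\mathsf{C\text{-}RASP}_+$ programs of size at most $c$ defining different languages are distinguished by a string of length at most $2^{q(c)}$, and exponential length is needed in the worst case.
   Context: $\mathsf{C\text{-}RASP}_+$ formulas over a finite alphabet $\Sigma$: $\phi ::= \sigma \mid \neg\phi \mid \phi_1\wedge\phi_2 \mid \sum_{t\in\mathcal T}\alpha_t t\sim k$, terms $t ::= \#[\phi] \mid c$, with $\sigma\in\Sigma$, $\alpha_t,k,c\in\mathbb{N}$, ${\sim}\in\{\ge,>,=,<,\le\}$. At position $i$ of $w$: $w,i\models\sigma$ iff $w_i=\sigma$; Boolean connectives as usual; $\#[\phi]$ evaluates to $|\{j\in[1,i]: w,j\models\phi\}|$, $c$ to $c$, comparisons are integer comparisons. $w\models\phi$ iff $w,|w|\models\phi$; $L(\phi)=\{w:w\models\phi\}$. Programs are straight-line (DAG) representations with references to earlier lines; size is the number of symbols with constants in binary and references counted as 1. The length complexity is $f(c)=\max\{\min\{|w| : w\in L(E)\setminus L(E')\} : E,E' \text{ programs of size}\le c,\ L(E)\setminus L(E')\neq\emptyset\}$. *)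

theory Defs
  imports "HOL-Computational_Algebra.Polynomial"
begin

datatype cmp = Ge | Gt | Eq | Lt | Le

text \<open>Ref n is a reference to the earlier
  line number n (lines numbered from 0). A comparison
  Cmp ts op k stands for  (sum over (alpha,t) in ts of alpha * t)  op  k,
  the summands being given as the finite list ts (LCons alpha t rest).\<close>
datatype 'a form =
    Sym 'a
  | Neg "'a form"
  | And "'a form" "'a form"
  | Cmp "'a lin" cmp nat
  | Ref nat
and 'a trm =
    Count "'a form"
  | Const nat
and 'a lin =
    LNil
  | LCons nat "'a trm" "'a lin"

type_synonym 'a program = "'a form list"

fun cmp_sem :: "cmp \<Rightarrow> nat \<Rightarrow> nat \<Rightarrow> bool" where
  "cmp_sem Ge x y = (x \<ge> y)"
| "cmp_sem Gt x y = (x > y)"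
| "cmp_sem Eq x y = (x = y)"
| "cmp_sem Lt x y = (x < y)"
| "cmp_sem Le x y = (x \<le> y)"

fun binlen :: "nat \<Rightarrow> nat" where
  "binlen n = (if n \<le> 1 then 1 else Suc (binlen (n div 2)))"

primrec fsize :: "'a form \<Rightarrow> nat" and tsize :: "'a trm \<Rightarrow> nat"
  and lsize :: "'a lin \<Rightarrow> nat" where
  "fsize (Sym a) = 1"
| "fsize (Neg f) = Suc (fsize f)"
| "fsize (And f g) = Suc (fsize f + fsize g)"
| "fsize (Cmp ts op k) = Suc (binlen k + lsize ts)"
| "fsize (Ref n) = 1"
| "tsize (Count f) = Suc (fsize f)"
| "tsize (Const c) = binlen c"
| "lsize LNil = 0"
| "lsize (LCons a t ts) = binlen a + tsize t + 1 + lsize ts"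

definition prog_size :: "'a program \<Rightarrow> nat" where
  "prog_size P = sum_list (map fsize P)"

primrec refs_ok :: "nat \<Rightarrow> 'a form \<Rightarrow> bool" and refs_ok_t :: "nat \<Rightarrow> 'a trm \<Rightarrow> bool"
  and refs_ok_l :: "nat \<Rightarrow> 'a lin \<Rightarrow> bool" where
  "refs_ok j (Sym a) = True"
| "refs_ok j (Neg f) = refs_ok j f"
| "refs_ok j (And f g) = (refs_ok j f \<and> refs_ok j g)"
| "refs_ok j (Cmp ts op k) = refs_ok_l j ts"
| "refs_ok j (Ref n) = (n < j)"
| "refs_ok_t j (Count f) = refs_ok j f"
| "refs_ok_t j (Const c) = True"
| "refs_ok_l j LNil = True"
| "refs_ok_l j (LCons a t ts) = (refs_ok_t j t \<and> refs_ok_l j ts)"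

definition wf_prog :: "'a program \<Rightarrow> bool" where
  "wf_prog P \<longleftrightarrow> P \<noteq> [] \<and> (\<forall>j < length P. refs_ok j (P ! j))"

text \<open>holds env w i f: w,i |= f (positions 1-based), where
  env n i is the truth value of line n at position i.\<close>
primrec holds :: "(nat \<Rightarrow> nat \<Rightarrow> bool) \<Rightarrow> 'a list \<Rightarrow> nat \<Rightarrow> 'a form \<Rightarrow> bool"
and tval :: "(nat \<Rightarrow> nat \<Rightarrow> bool) \<Rightarrow> 'a list \<Rightarrow> nat \<Rightarrow> 'a trm \<Rightarrow> nat"
and lval :: "(nat \<Rightarrow> nat \<Rightarrow> bool) \<Rightarrow> 'a list \<Rightarrow> nat \<Rightarrow> 'a lin \<Rightarrow> nat" where
  "holds env w i (Sym a) = (1 \<le> i \<and> i \<le> length w \<and> w ! (i - 1) = a)"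
| "holds env w i (Neg f) = (\<not> holds env w i f)"
| "holds env w i (And f g) = (holds env w i f \<and> holds env w i g)"
| "holds env w i (Cmp ts op k) =
     cmp_sem op (lval env w i ts) k"
| "holds env w i (Ref n) = env n i"
| "tval env w i (Count f) = card {j \<in> {1..i}. holds env w j f}"
| "tval env w i (Const c) = c"
| "lval env w i LNil = 0"
| "lval env w i (LCons a t ts) = a * tval env w i t + lval env w i ts"

primrec line_env :: "'a program \<Rightarrow> 'a list \<Rightarrow> nat \<Rightarrow> nat \<Rightarrow> nat \<Rightarrow> bool" where
  "line_env P w 0 = (\<lambda>n i. False)"
| "line_env P w (Suc j) = (\<lambda>n i. if n < j then line_env P w j n i
                                 else if n = j then holds (line_env P w j) w i (P ! j)
                                 else False)"

definition accepts :: "'a program \<Rightarrow> 'a list \<Rightarrow> bool" where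
  "accepts P w = holds (line_env P w (length P - 1)) w (length w) (last P)"

definition lang :: "'a program \<Rightarrow> 'a list set" where
  "lang P = {w. accepts P w}"

definition length_complexity :: "'a itself \<Rightarrow> nat \<Rightarrow> nat" where
  "length_complexity (_ :: 'a itself) c =
     Sup {LEAST n. \<exists>w \<in> lang E - lang E'. length w = n | E E' :: 'a program.
            wf_prog E \<and> wf_prog E' \<and> prog_size E \<le> c \<and> prog_size E' \<le> c
            \<and> lang E - lang E' \<noteq> {}}"

end

theory Submission
  imports Defs
begin
declare binlen.simps[simp del]
lemma binlen_ge: "Suc k \<le> 2 ^ binlen k"
proof (induction k rule: binlen.induct)
  case (1 n)
  show ?case
  proof (cases "n \<le> 1")
    case True then show ?thesis by (subst binlen.simps) auto
  next
    case False
    then have "binlen n = Suc (binlen (n div 2))" by (subst binlen.simps) auto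
    moreover have "Suc (n div 2) \<le> 2 ^ binlen (n div 2)" using 1 False by auto
    ultimately show ?thesis by auto
  qed
qed

lemma tval_lval_mono:
  "holds env w i f = holds env w i f"
  "(\<forall>i i'. i \<le> i' \<longrightarrow> tval env w i t \<le> tval env w i' t)"
  "(\<forall>i i'. i \<le> i' \<longrightarrow> lval env w i ts \<le> lval env w i' ts)"
proof (induction f and t and ts)
  case (Count f)
  then show ?case by (auto intro!: card_mono)
next
  case (LCons a t ts)
  then show ?case by (simp add: add_mono)
qed auto

fun capf :: "(nat \<Rightarrow> nat \<Rightarrow> bool) \<Rightarrow> 'a list \<Rightarrow> nat \<Rightarrow> 'a form \<Rightarrow> nat"
and capt :: "(nat \<Rightarrow> nat \<Rightarrow> bool) \<Rightarrow> 'a list \<Rightarrow> nat \<Rightarrow> 'a trm \<Rightarrow> nat"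
and capl :: "(nat \<Rightarrow> nat \<Rightarrow> bool) \<Rightarrow> 'a list \<Rightarrow> nat \<Rightarrow> 'a lin \<Rightarrow> nat" where
  "capf env w i (Sym a) = 0"
| "capf env w i (Neg f) = capf env w i f"
| "capf env w i (And f g) = capf env w i f + capf env w i g"
| "capf env w i (Cmp ts op k) = min (lval env w i ts) (Suc k) + capl env w i ts"
| "capf env w i (Ref n) = 0"
| "capt env w i (Count f) = capf env w i f"
| "capt env w i (Const c) = 0"
| "capl env w i LNil = 0"
| "capl env w i (LCons a t ts) = capt env w i t + capl env w i ts"

lemma cap_mono:
  "(\<forall>i i'. i \<le> i' \<longrightarrow> capf env w i f \<le> capf env w i' f)"
  "(\<forall>i i'. i \<le> i' \<longrightarrow> capt env w i t \<le> capt env w i' t)"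
  "(\<forall>i i'. i \<le> i' \<longrightarrow> capl env w i ts \<le> capl env w i' ts)"
proof (induction f and t and ts)
  case (And f g)
  then show ?case by (simp add: add_mono)
next
  case (Cmp ts op k)
  then show ?case using tval_lval_mono(3)[of env w ts]
    by (auto intro!: add_mono min.mono)
next
  case (LCons a t ts)
  then show ?case by (simp add: add_mono)
qed auto

lemma cap_bound:
  "capf env w i f \<le> 2 ^ fsize f"
  "capt env w i t \<le> 2 ^ tsize t"
  "capl env w i ts \<le> 2 ^ lsize ts"
proof (induction f and t and ts)
  case (Neg f)
  then show ?case by simp
next
  case (And f g)
  have "(2::nat) ^ fsize f + 2 ^ fsize g \<le> 2 ^ Suc (fsize f + fsize g)"
    by (simp add: power_add add_mono mult_2 one_le_power)
    
  then show ?case using And by simp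
next
  case (Cmp ts op k)
  have "Suc k \<le> 2 ^ binlen k" by (rule binlen_ge)
  hence "min (lval env w i ts) (Suc k) + capl env w i ts \<le> 2 ^ binlen k + 2 ^ lsize ts"
    using Cmp by (simp add: add_mono min.coboundedI2)
  also have "... \<le> 2 ^ Suc (binlen k + lsize ts)"
    by (simp add: power_add add_mono mult_2 one_le_power)
  finally show ?case by simp
next
  case (Count f)
  then show ?case by (simp add: le_trans[OF _ power_increasing])
next
  case (LCons a t ts)
  have "capt env w i t + capl env w i ts \<le> 2 ^ tsize t + 2 ^ lsize ts"
    using LCons by (simp add: add_mono)
  also have "... \<le> 2 ^ (binlen a + tsize t + 1 + lsize ts)"
  proof -
    have "(2::nat) ^ tsize t + 2 ^ lsize ts \<le> 2 ^ (tsize t + 1 + lsize ts)"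
      by (simp add: power_add add_mono mult_2 one_le_power)
    also have "... \<le> 2 ^ (binlen a + tsize t + 1 + lsize ts)" by (rule power_increasing) auto
    finally show ?thesis .
  qed
  finally show ?case by simp
qed auto


definition fpos :: "nat \<Rightarrow> nat \<Rightarrow> nat" where "fpos p i = (if i \<le> p then i else i - 1)"
definition del :: "'a list \<Rightarrow> nat \<Rightarrow> 'a list" where "del w p = take p w @ drop (Suc p) w"

lemma card_Suc_split:
  "card {j \<in> {1..Suc i}. P j} = card {j \<in> {1..i}. P j} + (if P (Suc i) then 1 else 0)"
proof -
  have "{j \<in> {1..Suc i}. P j} = (if P (Suc i) then insert (Suc i) {j \<in> {1..i}. P j} else {j \<in> {1..i}. P j})"
    by (auto simp: le_Suc_eq)
  then show ?thesis by simp
qed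

lemma card_shift:
  assumes "\<forall>j. j \<le> p \<longrightarrow> Q j = P j" "\<forall>j. Suc (Suc p) \<le> j \<longrightarrow> Q (j - 1) = P j"
    "Suc (Suc p) \<le> i"
  shows "card {j \<in> {1..i-1}. Q j} + card {j \<in> {1..Suc p}. P j} = card {j \<in> {1..i}. P j} + card {j \<in> {1..p}. P j}"
  using assms(3)
proof (induction i rule: dec_induct)
  case base
  have e: "card {j \<in> {1..p}. Q j} = card {j \<in> {1..p}. P j}"
    using assms(1) by (intro arg_cong[where f=card]) auto
  have "Q (Suc p) = P (Suc (Suc p))" using assms(2) by (metis diff_Suc_1 le_refl)
  have q1: "card {j \<in> {1..Suc p}. Q j} = card {j \<in> {1..p}. Q j} + (if Q (Suc p) then 1 else 0)"
    by (rule card_Suc_split)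
  have q2: "card {j \<in> {1..Suc p}. P j} = card {j \<in> {1..p}. P j} + (if P (Suc p) then 1 else 0)"
    by (rule card_Suc_split)
  have q3: "card {j \<in> {1..Suc (Suc p)}. P j} = card {j \<in> {1..Suc p}. P j} + (if P (Suc (Suc p)) then 1 else 0)"
    by (rule card_Suc_split)
  show ?case using e q1 q2 q3 \<open>Q (Suc p) = P (Suc (Suc p))\<close> by simp
next
  case (step m)
  have "Q m = P (Suc m)" using assms(2) step by (metis diff_Suc_1 le_SucI)
  moreover obtain m' where "m = Suc m'" using step by (cases m) auto
  moreover have "card {j \<in> {1..Suc m'}. Q j} = card {j \<in> {1..m'}. Q j} + (if Q (Suc m') then 1 else 0)"
    by (rule card_Suc_split)
  moreover have "card {j \<in> {1..Suc m}. P j} = card {j \<in> {1..m}. P j} + (if P (Suc m) then 1 else 0)"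
    by (rule card_Suc_split)
  ultimately show ?case using step by simp
qed

lemma cap_arith: "min (a::nat) K = min b K \<Longrightarrow> x + b = y + a \<Longrightarrow> a \<le> b \<Longrightarrow> b \<le> y \<Longrightarrow> min x K = min y K"
  unfolding min_def by (split if_split_asm; split if_split_asm; simp split: if_split)

lemma cmp_sem_cap: "cmp_sem op x k = cmp_sem op (min x (Suc k)) k"
  by (cases op) auto

lemma del_main:
  assumes env: "\<forall>n<J. \<forall>i. i \<noteq> Suc p \<longrightarrow> env' n (fpos p i) = env n i" and p: "p < length w"
  shows "refs_ok J f \<longrightarrow> capf env w p f = capf env w (Suc p) f \<longrightarrow>
           (\<forall>i. i \<noteq> Suc p \<longrightarrow> holds env' (del w p) (fpos p i) f = holds env w i f)"
  and "refs_ok_t J t \<longrightarrow> capt env w p t = capt env w (Suc p) t \<longrightarrow>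
           (\<forall>i\<le>p. tval env' (del w p) i t = tval env w i t) \<and>
           (\<forall>i. Suc (Suc p) \<le> i \<longrightarrow> tval env' (del w p) (i-1) t + tval env w (Suc p) t = tval env w i t + tval env w p t)"
  and "refs_ok_l J ts \<longrightarrow> capl env w p ts = capl env w (Suc p) ts \<longrightarrow>
           (\<forall>i\<le>p. lval env' (del w p) i ts = lval env w i ts) \<and>
           (\<forall>i. Suc (Suc p) \<le> i \<longrightarrow> lval env' (del w p) (i-1) ts + lval env w (Suc p) ts = lval env w i ts + lval env w p ts)"
proof (induction f and t and ts)
  case (Sym a)
  show ?case
  proof (intro impI allI)
    fix i assume "i \<noteq> Suc p"
    then consider "i \<le> p" | "Suc (Suc p) \<le> i" by linarith
    then show "holds env' (del w p) (fpos p i) (Sym a) = holds env w i (Sym a)"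
    proof cases
      case 1
      then show ?thesis using p by (auto simp: fpos_def del_def nth_append)
    next
      case 2
      then have "Suc (i - 2) = i - 1" by simp
      then show ?thesis using p 2 by (auto simp: fpos_def del_def nth_append min_def)
    qed
  qed
next
  case (Neg f)
  then show ?case by simp
next
  case (And f g)
  show ?case
  proof (intro impI)
    assume r: "refs_ok J (And f g)" and c: "capf env w p (And f g) = capf env w (Suc p) (And f g)"
    have m1: "capf env w p f \<le> capf env w (Suc p) f" and m2: "capf env w p g \<le> capf env w (Suc p) g"
      using cap_mono(1)[of env w f] cap_mono(1)[of env w g] by auto
    have "capf env w p f = capf env w (Suc p) f" "capf env w p g = capf env w (Suc p) g"
      using c m1 m2 by auto
    then show "\<forall>i. i \<noteq> Suc p \<longrightarrow> holds env' (del w p) (fpos p i) (And f g) = holds env w i (And f g)"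
      using And r by simp
  qed
next
  case (Cmp ts op k)
  show ?case
  proof (intro impI allI)
    assume r: "refs_ok J (Cmp ts op k)" and c: "capf env w p (Cmp ts op k) = capf env w (Suc p) (Cmp ts op k)"
    have m1: "min (lval env w p ts) (Suc k) \<le> min (lval env w (Suc p) ts) (Suc k)"
    proof -
      have "lval env w p ts \<le> lval env w (Suc p) ts" using tval_lval_mono(3)[of env w ts] by auto
      then show ?thesis by (simp add: min.mono)
    qed
    have m2: "capl env w p ts \<le> capl env w (Suc p) ts" using cap_mono(3)[of env w ts] by auto
    have c1: "min (lval env w p ts) (Suc k) = min (lval env w (Suc p) ts) (Suc k)"
      and c2: "capl env w p ts = capl env w (Suc p) ts" using c m1 m2 by auto
    have IH: "(\<forall>i\<le>p. lval env' (del w p) i ts = lval env w i ts) \<and>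
           (\<forall>i. Suc (Suc p) \<le> i \<longrightarrow> lval env' (del w p) (i-1) ts + lval env w (Suc p) ts = lval env w i ts + lval env w p ts)"
      using Cmp r c2 by simp
    fix i assume "i \<noteq> Suc p"
    then consider "i \<le> p" | "Suc (Suc p) \<le> i" by linarith
    then show "holds env' (del w p) (fpos p i) (Cmp ts op k) = holds env w i (Cmp ts op k)"
    proof cases
      case 1
      then show ?thesis using IH by (simp add: fpos_def)
    next
      case 2
      have e: "lval env' (del w p) (i-1) ts + lval env w (Suc p) ts = lval env w i ts + lval env w p ts"
        using IH 2 by blast
      have le1: "lval env w p ts \<le> lval env w (Suc p) ts" and le2: "lval env w (Suc p) ts \<le> lval env w i ts"
        using tval_lval_mono(3)[of env w ts] 2 by auto
      have "min (lval env' (del w p) (i-1) ts) (Suc k) = min (lval env w i ts) (Suc k)"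
        using cap_arith[OF c1 e le1 le2] .
      then have "cmp_sem op (lval env' (del w p) (i-1) ts) k = cmp_sem op (lval env w i ts) k"
        by (metis cmp_sem_cap)
      moreover have "fpos p i = i - 1" using 2 by (simp add: fpos_def)
      ultimately show ?thesis by simp
    qed
  qed
next
  case (Ref n)
  then show ?case using env by simp
next
  case (Count f)
  show ?case
  proof (intro impI)
    assume r: "refs_ok_t J (Count f)" and c: "capt env w p (Count f) = capt env w (Suc p) (Count f)"
    have IH: "\<forall>i. i \<noteq> Suc p \<longrightarrow> holds env' (del w p) (fpos p i) f = holds env w i f"
      using Count r c by simp
    have A: "\<forall>j. j \<le> p \<longrightarrow> holds env' (del w p) j f = holds env w j f"
    proof (intro allI impI)
      fix j assume "j \<le> p"
      then have "j \<noteq> Suc p" "fpos p j = j" by (auto simp: fpos_def)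
      then show "holds env' (del w p) j f = holds env w j f" using IH by metis
    qed
    have B: "\<forall>j. Suc (Suc p) \<le> j \<longrightarrow> holds env' (del w p) (j - 1) f = holds env w j f"
    proof (intro allI impI)
      fix j assume "Suc (Suc p) \<le> j"
      then have "j \<noteq> Suc p" "fpos p j = j - 1" by (auto simp: fpos_def)
      then show "holds env' (del w p) (j - 1) f = holds env w j f" using IH by metis
    qed
    show "(\<forall>i\<le>p. tval env' (del w p) i (Count f) = tval env w i (Count f)) \<and>
           (\<forall>i. Suc (Suc p) \<le> i \<longrightarrow> tval env' (del w p) (i-1) (Count f) + tval env w (Suc p) (Count f) = tval env w i (Count f) + tval env w p (Count f))"
    proof (intro conjI allI impI)
      fix i assume "i \<le> p"
      then show "tval env' (del w p) i (Count f) = tval env w i (Count f)"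
        using A by (simp, intro arg_cong[where f=card]) auto
    next
      fix i assume "Suc (Suc p) \<le> i"
      then show "tval env' (del w p) (i-1) (Count f) + tval env w (Suc p) (Count f) = tval env w i (Count f) + tval env w p (Count f)"
        using card_shift[OF A B] by simp
    qed
  qed
next
  case (Const c)
  then show ?case by simp
next
  case LNil
  then show ?case by simp
next
  case (LCons a t ts)
  show ?case
  proof (intro impI)
    assume r: "refs_ok_l J (LCons a t ts)" and c: "capl env w p (LCons a t ts) = capl env w (Suc p) (LCons a t ts)"
    have m1: "capt env w p t \<le> capt env w (Suc p) t" and m2: "capl env w p ts \<le> capl env w (Suc p) ts"
      using cap_mono(2)[of env w t] cap_mono(3)[of env w ts] by auto
    have "capt env w p t = capt env w (Suc p) t" "capl env w p ts = capl env w (Suc p) ts"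
      using c m1 m2 by auto
    then have I1: "(\<forall>i\<le>p. tval env' (del w p) i t = tval env w i t) \<and>
           (\<forall>i. Suc (Suc p) \<le> i \<longrightarrow> tval env' (del w p) (i-1) t + tval env w (Suc p) t = tval env w i t + tval env w p t)"
      and I2: "(\<forall>i\<le>p. lval env' (del w p) i ts = lval env w i ts) \<and>
           (\<forall>i. Suc (Suc p) \<le> i \<longrightarrow> lval env' (del w p) (i-1) ts + lval env w (Suc p) ts = lval env w i ts + lval env w p ts)"
      using LCons r by auto
    show "(\<forall>i\<le>p. lval env' (del w p) i (LCons a t ts) = lval env w i (LCons a t ts)) \<and>
           (\<forall>i. Suc (Suc p) \<le> i \<longrightarrow> lval env' (del w p) (i-1) (LCons a t ts) + lval env w (Suc p) (LCons a t ts) = lval env w i (LCons a t ts) + lval env w p (LCons a t ts))"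
    proof (intro conjI allI impI)
      fix i assume "i \<le> p"
      then show "lval env' (del w p) i (LCons a t ts) = lval env w i (LCons a t ts)" using I1 I2 by simp
    next
      fix i assume i: "Suc (Suc p) \<le> i"
      have e1: "tval env' (del w p) (i-1) t + tval env w (Suc p) t = tval env w i t + tval env w p t"
        and e2: "lval env' (del w p) (i-1) ts + lval env w (Suc p) ts = lval env w i ts + lval env w p ts"
        using I1 I2 i by auto
      have "a * tval env' (del w p) (i-1) t + a * tval env w (Suc p) t = a * tval env w i t + a * tval env w p t"
        using e1 by (metis distrib_left)
      then show "lval env' (del w p) (i-1) (LCons a t ts) + lval env w (Suc p) (LCons a t ts) = lval env w i (LCons a t ts) + lval env w p (LCons a t ts)"
        using e2 by simp
    qed
  qed
qed


lemma line_del: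
  assumes wf: "\<forall>j<length P. refs_ok j (P!j)" and p: "p < length w"
    and st: "\<forall>m<length P. capf (line_env P w m) w p (P!m) = capf (line_env P w m) w (Suc p) (P!m)"
  shows "J \<le> length P \<Longrightarrow> \<forall>n<J. \<forall>i. i \<noteq> Suc p \<longrightarrow> line_env P (del w p) J n (fpos p i) = line_env P w J n i"
proof (induction J)
  case 0
  then show ?case by simp
next
  case (Suc J)
  then have IH: "\<forall>n<J. \<forall>i. i \<noteq> Suc p \<longrightarrow> line_env P (del w p) J n (fpos p i) = line_env P w J n i"
    by simp
  have J: "J < length P" using Suc by simp
  have h: "\<forall>i. i \<noteq> Suc p \<longrightarrow> holds (line_env P (del w p) J) (del w p) (fpos p i) (P!J) = holds (line_env P w J) w i (P!J)"
    using del_main(1)[OF IH p, of "P!J"] wf st J by blast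
  show ?case
  proof (intro allI impI)
    fix n i assume "n < Suc J" "i \<noteq> Suc p"
    then show "line_env P (del w p) (Suc J) n (fpos p i) = line_env P w (Suc J) n i"
      using IH h by (cases "n < J") auto
  qed
qed

lemma accepts_del:
  assumes wf: "wf_prog P" and p: "Suc (Suc p) \<le> length w"
    and st: "\<forall>m<length P. capf (line_env P w m) w p (P!m) = capf (line_env P w m) w (Suc p) (P!m)"
  shows "accepts P (del w p) = accepts P w"
proof -
  have ne: "P \<noteq> []" and r: "\<forall>j<length P. refs_ok j (P!j)" using wf by (auto simp: wf_prog_def)
  define J where "J = length P - 1"
  have J: "J < length P" "J \<le> length P" using ne by (auto simp: J_def)
  have lastP: "last P = P ! J" using ne by (simp add: J_def last_conv_nth)
  have p': "p < length w" using p by simp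
  have env: "\<forall>n<J. \<forall>i. i \<noteq> Suc p \<longrightarrow> line_env P (del w p) J n (fpos p i) = line_env P w J n i"
    using line_del[OF r p' st J(2)] .
  have len: "length (del w p) = fpos p (length w)" using p by (auto simp: del_def fpos_def)
  have "holds (line_env P (del w p) J) (del w p) (fpos p (length w)) (P!J) = holds (line_env P w J) w (length w) (P!J)"
    using del_main(1)[OF env p', of "P!J"] r st J p by auto
  then show ?thesis unfolding accepts_def J_def[symmetric] lastP len by simp
qed

definition TT :: "'a program \<Rightarrow> 'a list \<Rightarrow> nat \<Rightarrow> nat" where
  "TT P w i = (\<Sum>m<length P. capf (line_env P w m) w i (P!m))"

lemma TT_mono: "i \<le> i' \<Longrightarrow> TT P w i \<le> TT P w i'"
  unfolding TT_def using cap_mono(1) by (intro sum_mono) blast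

lemma TT_eq:
  assumes "TT P w p = TT P w (Suc p)"
  shows "\<forall>m<length P. capf (line_env P w m) w p (P!m) = capf (line_env P w m) w (Suc p) (P!m)"
proof (rule ccontr)
  assume "\<not> ?thesis"
  then obtain m where m: "m < length P" "capf (line_env P w m) w p (P!m) \<noteq> capf (line_env P w m) w (Suc p) (P!m)"
    by blast
  have le: "\<forall>x\<in>{..<length P}. capf (line_env P w x) w p (P!x) \<le> capf (line_env P w x) w (Suc p) (P!x)"
    using cap_mono(1) by (meson lessI less_imp_le_nat)
  have "TT P w p < TT P w (Suc p)" unfolding TT_def
  proof (rule sum_strict_mono_ex1)
    show "\<exists>a\<in>{..<length P}. capf (line_env P w a) w p (P ! a) < capf (line_env P w a) w (Suc p) (P ! a)"
    proof (intro bexI[of _ m])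
      have "capf (line_env P w m) w p (P ! m) \<le> capf (line_env P w m) w (Suc p) (P ! m)"
        using le m by simp
      then show "capf (line_env P w m) w p (P ! m) < capf (line_env P w m) w (Suc p) (P ! m)"
        using m(2) by linarith
    qed (use m in simp)
  qed (use le in auto)
  then show False using assms by simp
qed

lemma fsize_pos: "1 \<le> fsize f" by (cases f) auto

lemma len_le_size: "length P \<le> prog_size P"
  unfolding prog_size_def
proof (induction P)
  case (Cons a P)
  then show ?case using fsize_pos[of a] by simp
qed simp

lemma TT_bound: "TT P w i \<le> prog_size P * 2 ^ prog_size P"
proof -
  have "TT P w i \<le> (\<Sum>m<length P. (2::nat) ^ prog_size P)" unfolding TT_def
  proof (rule sum_mono)
    fix m assume "m \<in> {..<length P}"
    then have "fsize (P!m) \<le> prog_size P" unfolding prog_size_def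
      using elem_le_sum_list[of m "map fsize P"] by auto
    then show "capf (line_env P w m) w i (P ! m) \<le> 2 ^ prog_size P"
      using cap_bound(1)[of "line_env P w m" w i "P!m"] power_increasing[of "fsize (P!m)" "prog_size P" "2::nat"]
      by linarith
  qed
  also have "... = length P * 2 ^ prog_size P" by simp
  also have "... \<le> prog_size P * 2 ^ prog_size P" using len_le_size by simp
  finally show ?thesis .
qed

lemma shorten:
  assumes wf: "wf_prog E" "wf_prog E'" and sz: "prog_size E \<le> c" "prog_size E' \<le> c"
  shows "w \<in> lang E - lang E' \<Longrightarrow> \<exists>w'. w' \<in> lang E - lang E' \<and> length w' \<le> 2 * (c * 2 ^ c) + 1"
proof (induction "length w" arbitrary: w rule: less_induct)
  case less
  let ?M = "2 * (c * 2 ^ c)"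
  show ?case
  proof (cases "length w \<le> ?M + 1")
    case True
    then show ?thesis using less by blast
  next
    case False
    define T where "T i = TT E w i + TT E' w i" for i
    have Tb: "T i \<le> ?M" for i
    proof -
      have "prog_size E * 2 ^ prog_size E \<le> c * 2 ^ c" using sz(1) by (intro mult_mono power_increasing) auto
      moreover have "prog_size E' * 2 ^ prog_size E' \<le> c * 2 ^ c" using sz(2) by (intro mult_mono power_increasing) auto
      ultimately show ?thesis unfolding T_def using TT_bound[of E w i] TT_bound[of E' w i] by linarith
    qed
    have Tm: "i \<le> i' \<Longrightarrow> T i \<le> T i'" for i i' unfolding T_def
      by (intro add_mono TT_mono)
    have "\<exists>p. Suc (Suc p) \<le> length w \<and> T p = T (Suc p)"
    proof (rule ccontr)
      assume "\<not> ?thesis"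
      then have lt: "Suc (Suc p) \<le> length w \<Longrightarrow> T p < T (Suc p)" for p
        using Tm[of p "Suc p"] by fastforce
      have "Suc k \<le> length w \<Longrightarrow> k \<le> T k" for k
      proof (induction k)
        case 0 then show ?case by simp
      next
        case (Suc k) then show ?case using lt[of k] by simp
      qed
      then have "length w - 1 \<le> T (length w - 1)" using False by simp
      then show False using Tb[of "length w - 1"] False by simp
    qed
    then obtain p where p: "Suc (Suc p) \<le> length w" "T p = T (Suc p)" by blast
    have "TT E w p \<le> TT E w (Suc p)" "TT E' w p \<le> TT E' w (Suc p)" by (simp_all add: TT_mono)
    then have "TT E w p = TT E w (Suc p)" "TT E' w p = TT E' w (Suc p)" using p(2) unfolding T_def by auto
    then have a1: "accepts E (del w p) = accepts E w" and a2: "accepts E' (del w p) = accepts E' w"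
      using accepts_del[OF wf(1) p(1)] accepts_del[OF wf(2) p(1)] TT_eq by blast+
    have "length (del w p) < length w" using p by (auto simp: del_def)
    moreover have "del w p \<in> lang E - lang E'" using less(2) a1 a2 by (simp add: lang_def)
    ultimately show ?thesis using less(1) by blast
  qed
qed


definition LSet :: "'a itself \<Rightarrow> nat \<Rightarrow> nat set" where
  "LSet (_ :: 'a itself) c = {LEAST n. \<exists>w \<in> lang E - lang E'. length w = n | E E' :: 'a program.
            wf_prog E \<and> wf_prog E' \<and> prog_size E \<le> c \<and> prog_size E' \<le> c
            \<and> lang E - lang E' \<noteq> {}}"

lemma LSet_bound: "x \<in> LSet TYPE('a) c \<Longrightarrow> x \<le> 2 * (c * 2 ^ c) + 1"
proof -
  assume "x \<in> LSet TYPE('a) c"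
  then obtain E E' :: "'a program" where h: "wf_prog E" "wf_prog E'" "prog_size E \<le> c" "prog_size E' \<le> c"
    "lang E - lang E' \<noteq> {}" and x: "x = (LEAST n. \<exists>w \<in> lang E - lang E'. length w = n)"
    unfolding LSet_def by blast
  obtain w where "w \<in> lang E - lang E'" using h(5) by blast
  then obtain w' where w': "w' \<in> lang E - lang E'" "length w' \<le> 2 * (c * 2 ^ c) + 1"
    using shorten[OF h(1-4)] by blast
  have "x \<le> length w'" unfolding x using w'(1) by (intro Least_le) blast
  then show ?thesis using w'(2) by simp
qed

lemma LC_eq: "length_complexity TYPE('a) c = Sup (LSet TYPE('a) c)"
  unfolding length_complexity_def LSet_def ..

lemma LC_upper: "length_complexity TYPE('a) c \<le> 2 * (c * 2 ^ c) + 1"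
proof (cases "LSet TYPE('a) c = {}")
  case True
  then show ?thesis unfolding LC_eq by (simp add: Sup_nat_def)
next
  case False
  then show ?thesis unfolding LC_eq by (meson LSet_bound cSup_least)
qed

lemma pow_bound: "2 * (c * 2 ^ c) + 1 \<le> (2::nat) ^ (2 + c * 2)"
proof -
  have "c < 2 ^ c" by (rule less_exp)
  then have "c * 2 ^ c \<le> 2 ^ c * 2 ^ c" by simp
  also have "... = 2 ^ (c * 2)" by (simp add: power_add[symmetric] mult_2_right)
  moreover have "(1::nat) \<le> 2 ^ (c * 2)" by simp
  ultimately have "2 * (c * 2 ^ c) + 1 \<le> 2 * 2 ^ (c * 2) + 2 ^ (c*2)" by linarith
  also have "... \<le> 4 * 2 ^ (c * 2)" by simp
  also have "... = 2 ^ (2 + c * 2)" by (simp add: power_add)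
  finally show ?thesis .
qed

lemma binlen_pow: "binlen (2 ^ m) = Suc m"
proof (induction m)
  case 0
  then show ?case by (subst binlen.simps) simp
next
  case (Suc m)
  have "(1::nat) \<le> 2 ^ m" by simp
  then have "(1::nat) < 2 * 2 ^ m" by linarith
  then have "binlen (2 ^ Suc m) = Suc (binlen (2 ^ Suc m div 2))" by (subst binlen.simps) simp
  then show ?case using Suc by simp
qed

lemma LC_lower:
  assumes c: "14 \<le> c"
  shows "2 ^ (c div 2) \<le> length_complexity TYPE('a) c"
proof -
  define K :: nat where "K = 2 ^ (c - 7)"
  define E :: "'a program" where "E = [Cmp (LCons 1 (Count (Cmp LNil Eq 0)) LNil) Ge K]"
  define E' :: "'a program" where "E' = [Cmp LNil Lt 0]"
  have cs: "card {j. Suc 0 \<le> j \<and> j \<le> n} = n" for n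
  proof -
    have "{j. Suc 0 \<le> j \<and> j \<le> n} = {1..n}" by auto
    then show ?thesis by simp
  qed
  have accE: "accepts E w = (K \<le> length w)" for w
    by (simp add: accepts_def E_def cs)
  have accE': "\<not> accepts E' w" for w
    by (simp add: accepts_def E'_def)
  have b1: "binlen (Suc 0) = 1" by (subst binlen.simps) simp
  have b0: "binlen 0 = 1" by (subst binlen.simps) simp
  have szE: "prog_size E = c" using c
    by (simp add: E_def prog_size_def K_def binlen_pow b0 b1)
  have szE': "prog_size E' \<le> c" using c by (simp add: E'_def prog_size_def b0)
  have wfE: "wf_prog E" "wf_prog E'" by (auto simp: wf_prog_def E_def E'_def)
  have inl: "replicate K undefined \<in> lang E - lang E'" by (simp add: lang_def accE accE')
  define x where "x = (LEAST n. \<exists>w \<in> lang E - lang E'. length w = n)"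
  have xin: "x \<in> LSet TYPE('a) c" unfolding LSet_def x_def
    using wfE szE szE' inl by blast
  have "\<exists>w \<in> lang E - lang E'. length w = x" unfolding x_def
    by (rule LeastI_ex) (use inl in blast)
  then have "K \<le> x" by (auto simp: lang_def accE)
  moreover have "x \<le> Sup (LSet TYPE('a) c)"
    by (rule cSup_upper[OF xin]) (auto intro: bdd_aboveI LSet_bound)
  moreover have "(2::nat) ^ (c div 2) \<le> K" unfolding K_def using c by (intro power_increasing) auto
  ultimately show ?thesis unfolding LC_eq by linarith
qed

theorem theorem4p7:
  shows "(\<exists>q :: nat poly. \<forall>c. length_complexity TYPE('a::finite) c \<le> 2 ^ poly q c)
       \<and> (\<exists>a::nat. a > 0 \<and> (\<exists>N. \<forall>c \<ge> N. 2 ^ (c div a) \<le> length_complexity TYPE('a) c))"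
proof -
  have A: "\<forall>c. length_complexity TYPE('a) c \<le> 2 ^ poly [:2::nat, 2:] c"
  proof
    fix c
    have "poly [:2::nat, 2:] c = 2 + c * 2" by simp
    then show "length_complexity TYPE('a) c \<le> 2 ^ poly [:2::nat, 2:] c"
      using LC_upper[of c, where 'a='a] pow_bound[of c] by simp
  qed
  have C: "(2::nat) > 0 \<and> (\<exists>N. \<forall>c\<ge>N. 2 ^ (c div 2) \<le> length_complexity TYPE('a) c)"
    using LC_lower by auto
  from A C show ?thesis by blast
qed

end
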